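(* For every single-use two-way transducer there is $k\in\{1,2,\dots\}$ such that for every input $w$, the accepting run on $\vdash w\dashv$ (if it exists) has at most $k$ configurations whose head is at any given position.
   Context: Fix a countably infinite set $\mathbb A$ of atoms; polynomial orbit-finite sets are built from $\mathbb A$ and singletons by finite products and disjoint unions; equivariant means commuting with all bijections of $\mathbb A$. A two-way single-use transducer has polynomial orbit-finite alphabets $\Sigma,\Gamma$, finitely many states with initial $q_0$, finitely many registers with values in $\mathbb A+\bot$, and a deterministic transition function assigning to each state a question and, per answer, a next state and an action. Questions: an equivariant function $\Sigma+\{\vdash,\dashv\}\to\{\mathrm{yes},\mathrm{no}\}$ of the letter under the head; or equality of registers $r_1,r_2$ (reject if one is $\bot$), after which $r_1,r_2$ are set to $\bot$. Actions: store an equivariant function $\Sigma+\{\vdash,\dashv\}\to\mathbb A+\bot$ of the current letter in a register; append $f(r_1,\dots,r_k)$ to the output for equivariant $f:\mathbb A^k\to\Gamma$ and distinct registers, setting them to $\bot$ (reject if one is $\bot$); move the head left or right; accept or reject. A configuration consists of head position, state, register valuation and output so far; the run on $w$ starts on $\vdash$ of $\vdash w\dashv$ in $q_0$ with all registers $\bot$ and empty output; an accepting run is one ending with the accept action. *)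

theory Defs
  imports Main
begin

text \<open>Atoms are modelled by the countably infinite type nat; a permutation of the
atoms is a bijection pi :: nat => nat.\<close>

datatype pof = PAtoms | PUnit | PProd pof pof | PSum pof pof

datatype aval = AAtom nat | AUnit | APair aval aval | AInl aval | AInr aval

fun inP :: "pof \<Rightarrow> aval \<Rightarrow> bool" where
  "inP PAtoms v = (\<exists>a. v = AAtom a)"
| "inP PUnit v = (v = AUnit)"
| "inP (PProd X Y) v = (\<exists>x y. v = APair x y \<and> inP X x \<and> inP Y y)"
| "inP (PSum X Y) v = ((\<exists>x. v = AInl x \<and> inP X x) \<or> (\<exists>y. v = AInr y \<and> inP Y y))"

fun aperm :: "(nat \<Rightarrow> nat) \<Rightarrow> aval \<Rightarrow> aval" where
  "aperm \<pi> (AAtom a) = AAtom (\<pi> a)"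
| "aperm \<pi> AUnit = AUnit"
| "aperm \<pi> (APair x y) = APair (aperm \<pi> x) (aperm \<pi> y)"
| "aperm \<pi> (AInl x) = AInl (aperm \<pi> x)"
| "aperm \<pi> (AInr x) = AInr (aperm \<pi> x)"

datatype 'l tletter = LMark | Sym 'l | RMark

definition in_tape :: "pof \<Rightarrow> aval tletter \<Rightarrow> bool" where
  "in_tape S l = (l = LMark \<or> l = RMark \<or> (\<exists>a. l = Sym a \<and> inP S a))"

definition tperm :: "(nat \<Rightarrow> nat) \<Rightarrow> aval tletter \<Rightarrow> aval tletter" where
  "tperm \<pi> = map_tletter (aperm \<pi>)"

datatype 'r question = QTest "aval tletter \<Rightarrow> bool" | QEq 'r 'r

datatype 'r action =
    Store 'r "aval tletter \<Rightarrow> nat option"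
  | Output "'r list" "nat list \<Rightarrow> aval"
  | MoveL | MoveR | Accept | Reject

record ('q, 'r) sut =
  sigma :: pof
  gamma :: pof
  init :: 'q
  delta :: "'q \<Rightarrow> 'r question \<times> (bool \<Rightarrow> 'q \<times> 'r action)"

definition question_ok :: "pof \<Rightarrow> 'r question \<Rightarrow> bool" where
  "question_ok S Q = (case Q of
      QTest f \<Rightarrow> (\<forall>\<pi> l. bij \<pi> \<longrightarrow> in_tape S l \<longrightarrow> f (tperm \<pi> l) = f l)
    | QEq r1 r2 \<Rightarrow> True)"

definition action_ok :: "pof \<Rightarrow> pof \<Rightarrow> 'r action \<Rightarrow> bool" where
  "action_ok S G act = (case act of
      Store r h \<Rightarrow> (\<forall>\<pi> l. bij \<pi> \<longrightarrow> in_tape S l \<longrightarrow> h (tperm \<pi> l) = map_option \<pi> (h l))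
    | Output rs f \<Rightarrow> distinct rs
          \<and> (\<forall>xs. length xs = length rs \<longrightarrow> inP G (f xs))
          \<and> (\<forall>\<pi> xs. bij \<pi> \<longrightarrow> length xs = length rs \<longrightarrow> f (map \<pi> xs) = aperm \<pi> (f xs))
    | _ \<Rightarrow> True)"

text \<open>Well-formedness: all the functions used are equivariant with the right
domains/codomains (finiteness of states and registers is imposed via the
sort finite on the type parameters).\<close>
definition wf_sut :: "('q, 'r) sut \<Rightarrow> bool" where
  "wf_sut T = (\<forall>q. question_ok (sigma T) (fst (delta T q))
       \<and> (\<forall>b. action_ok (sigma T) (gamma T) (snd (snd (delta T q) b))))"

record ('q, 'r) config =
  pos :: nat
  st :: 'q
  regs :: "'r \<Rightarrow> nat option"
  out :: "aval list"

datatype ('q, 'r) result = Cont "('q, 'r) config" | Acc "aval list" | Rej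

text \<open>Position 0 is the left endmarker, positions 1..length w hold w,
position length w + 1 is the right endmarker.\<close>
definition tape_at :: "aval list \<Rightarrow> nat \<Rightarrow> aval tletter" where
  "tape_at w p = (if p = 0 then LMark else if p \<le> length w then Sym (w ! (p - 1)) else RMark)"

definition exec :: "aval list \<Rightarrow> 'q \<times> 'r action \<Rightarrow> ('q, 'r) config \<Rightarrow> ('q, 'r) result" where
  "exec w qa c = (case qa of (q', act) \<Rightarrow> (case act of
      Store r h \<Rightarrow> Cont (c\<lparr>st := q', regs := (regs c)(r := h (tape_at w (pos c)))\<rparr>)
    | Output rs f \<Rightarrow>
        (if \<exists>r\<in>set rs. regs c r = None then Rej
         else Cont (c\<lparr>st := q',
                      regs := (\<lambda>r. if r \<in> set rs then None else regs c r),
                      out := out c @ [f (map (\<lambda>r. the (regs c r)) rs)]\<rparr>))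
    | MoveL \<Rightarrow> (if pos c = 0 then Rej else Cont (c\<lparr>st := q', pos := pos c - 1\<rparr>))
    | MoveR \<Rightarrow> (if pos c \<ge> length w + 1 then Rej else Cont (c\<lparr>st := q', pos := pos c + 1\<rparr>))
    | Accept \<Rightarrow> Acc (out c)
    | Reject \<Rightarrow> Rej))"

definition step :: "('q, 'r) sut \<Rightarrow> aval list \<Rightarrow> ('q, 'r) config \<Rightarrow> ('q, 'r) result" where
  "step T w c = (case delta T (st c) of
      (QTest f, g) \<Rightarrow> exec w (g (f (tape_at w (pos c)))) c
    | (QEq r1 r2, g) \<Rightarrow>
        (if regs c r1 = None \<or> regs c r2 = None then Rej
         else exec w (g (regs c r1 = regs c r2)) (c\<lparr>regs := (regs c)(r1 := None, r2 := None)\<rparr>)))"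

definition init_config :: "('q, 'r) sut \<Rightarrow> ('q, 'r) config" where
  "init_config T = \<lparr>pos = 0, st = init T, regs = (\<lambda>_. None), out = []\<rparr>"

definition accepting_run :: "('q, 'r) sut \<Rightarrow> aval list \<Rightarrow> ('q, 'r) config list \<Rightarrow> bool" where
  "accepting_run T w cs = (cs \<noteq> [] \<and> hd cs = init_config T
     \<and> (\<forall>i. Suc i < length cs \<longrightarrow> step T w (cs ! i) = Cont (cs ! Suc i))
     \<and> (\<exists>res. step T w (last cs) = Acc res))"

end

theory Submission
  imports Defs
begin

definition rel :: "'r set \<Rightarrow> ('q, 'r) config \<Rightarrow> ('q, 'r) config \<Rightarrow> bool" where
  "rel J c c' = (pos c = pos c' \<and> st c = st c' \<and> (\<forall>r. r \<notin> J \<longrightarrow> regs c r = regs c' r)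
      \<and> (\<forall>r. (regs c r = None) = (regs c' r = None)))"

fun rr :: "'r set \<Rightarrow> ('q, 'r) result \<Rightarrow> ('q, 'r) result \<Rightarrow> bool" where
  "rr J (Cont d) (Cont d') = rel J d d'"
| "rr J (Acc x) (Acc y) = True"
| "rr J Rej Rej = True"
| "rr J _ _ = False"

definition same_out :: "('q, 'r) sut \<Rightarrow> ('q, 'r) config \<Rightarrow> ('q, 'r) config \<Rightarrow> bool" where
  "same_out T c c' = (case fst (delta T (st c)) of
      QEq r1 r2 \<Rightarrow> (regs c r1 = regs c r2) = (regs c' r1 = regs c' r2)
    | QTest f \<Rightarrow> True)"

definition KK :: "('q, 'r) sut \<Rightarrow> 'r set \<Rightarrow> ('q, 'r) config \<Rightarrow> 'r set" where
  "KK T J c = (case fst (delta T (st c)) of QEq r1 r2 \<Rightarrow> J - {r1, r2} | QTest f \<Rightarrow> J)"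

lemma rel_mono: "rel J c c' \<Longrightarrow> J \<subseteq> J' \<Longrightarrow> rel J' c c'"
  unfolding rel_def by blast

lemma rel_sym: "rel J c c' \<Longrightarrow> rel J c' c"
  unfolding rel_def by metis

lemma exec_rel:
  assumes "rel J c c'"
  shows "rr J (exec w qa c) (exec w qa c')"
proof -
  obtain q' act where qa: "qa = (q', act)" by (cases qa)
  show ?thesis
  proof (cases act)
    case (Store r h)
    then show ?thesis using assms by (auto simp: exec_def qa rel_def)
  next
    case (Output rs f)
    then show ?thesis using assms by (auto simp: exec_def qa rel_def)
  qed (use assms in \<open>auto simp: exec_def qa rel_def\<close>)
qed

lemma step_rel:
  assumes "rel J c c'" "same_out T c c'"
  shows "rr (KK T J c) (step T w c) (step T w c')"
proof -
  obtain Q g where d: "delta T (st c) = (Q, g)" by (cases "delta T (st c)")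
  have d': "delta T (st c') = (Q, g)" using d assms(1) by (simp add: rel_def)
  show ?thesis
  proof (cases Q)
    case (QTest f)
    have "tape_at w (pos c) = tape_at w (pos c')" using assms(1) by (simp add: rel_def)
    then show ?thesis using exec_rel[OF assms(1)] d d' QTest
      by (simp add: step_def KK_def)
  next
    case (QEq r1 r2)
    show ?thesis
    proof (cases "regs c r1 = None \<or> regs c r2 = None")
      case True
      then have "regs c' r1 = None \<or> regs c' r2 = None" using assms(1) by (simp add: rel_def)
      then show ?thesis using True d d' QEq by (simp add: step_def)
    next
      case False
      then have F': "\<not> (regs c' r1 = None \<or> regs c' r2 = None)" using assms(1) unfolding rel_def by metis
      have eq: "(regs c r1 = regs c r2) = (regs c' r1 = regs c' r2)"
        using assms(2) d QEq by (simp add: same_out_def)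
      have r: "rel (J - {r1, r2}) (c\<lparr>regs := (regs c)(r1 := None, r2 := None)\<rparr>)
                   (c'\<lparr>regs := (regs c')(r1 := None, r2 := None)\<rparr>)"
        using assms(1) by (auto simp: rel_def)
      have s1: "step T w c = exec w (g (regs c r1 = regs c r2)) (c\<lparr>regs := (regs c)(r1 := None, r2 := None)\<rparr>)"
        using False d QEq by (auto simp: step_def)
      have s2: "step T w c' = exec w (g (regs c r1 = regs c r2)) (c'\<lparr>regs := (regs c')(r1 := None, r2 := None)\<rparr>)"
        using F' d' QEq eq by (auto simp: step_def)
      have k: "KK T J c = J - {r1, r2}" using d QEq by (simp add: KK_def)
      show ?thesis unfolding s1 s2 k by (rule exec_rel[OF r])
    qed
  qed
qed


lemma KK_st: "st c = st c' \<Longrightarrow> KK T J c = KK T J c'"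
  by (simp add: KK_def)

lemma KK_sub: "KK T J c \<subseteq> J"
  by (auto simp: KK_def split: question.splits)

lemma le1_pow: "x \<le> 1 \<Longrightarrow> (x::nat) \<le> 2 ^ n"
  using one_le_power[of "2::nat" n] by linarith

context
  fixes T :: "('q, 'r::finite) sut" and w :: "aval list" and cs :: "('q, 'r) config list" and res
  assumes hstep: "\<forall>i. Suc i < length cs \<longrightarrow> step T w (cs ! i) = Cont (cs ! Suc i)"
    and hlast: "cs \<noteq> []" "step T w (last cs) = Acc res"
begin

definition coh :: "'r set \<Rightarrow> nat set \<Rightarrow> bool" where
  "coh J S = (S \<subseteq> {..<length cs} \<and> (\<forall>t\<in>S. \<forall>t'\<in>S. rel J (cs ! t) (cs ! t')))"

lemma last_step: "step T w (cs ! (length cs - 1)) = Acc res"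
  using hlast by (simp add: last_conv_nth)

lemma shift:
  assumes "coh J S" "\<forall>t\<in>S. \<forall>t'\<in>S. same_out T (cs ! t) (cs ! t')" "\<not> card S \<le> 1"
  shows "(\<forall>t\<in>S. Suc t < length cs) \<and> (\<forall>t0\<in>S. coh (KK T J (cs ! t0)) (Suc ` S))"
proof -
  have fin: "finite S" using assms(1) unfolding coh_def using finite_subset by blast
  have all: "\<forall>t\<in>S. Suc t < length cs"
  proof (rule ccontr)
    assume "\<not> (\<forall>t\<in>S. Suc t < length cs)"
    then obtain t where t: "t \<in> S" "\<not> Suc t < length cs" by blast
    have tl: "t < length cs" using t assms(1) by (auto simp: coh_def)
    then have teq: "t = length cs - 1" using t by simp
    obtain t' where t': "t' \<in> S" "t' \<noteq> t"
    proof -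
      have "S \<noteq> {t}" using assms(3) by auto
      then show ?thesis using that t(1) by blast
    qed
    have t'l: "Suc t' < length cs" using t' tl teq assms(1) by (auto simp: coh_def)
    have r1: "rel J (cs ! t) (cs ! t')" using assms(1) t(1) t'(1) by (simp add: coh_def)
    have r2: "same_out T (cs ! t) (cs ! t')" using assms(2) t(1) t'(1) by simp
    have "rr (KK T J (cs ! t)) (step T w (cs ! t)) (step T w (cs ! t'))"
      by (rule step_rel[OF r1 r2])
    then show False using last_step teq hstep t'l by simp
  qed
  moreover have "\<forall>t0\<in>S. coh (KK T J (cs ! t0)) (Suc ` S)"
  proof
    fix t0 assume t0: "t0 \<in> S"
    show "coh (KK T J (cs ! t0)) (Suc ` S)"
      unfolding coh_def
    proof (intro conjI ballI)
      show "Suc ` S \<subseteq> {..<length cs}" using all by auto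
    next
      fix u u' assume "u \<in> Suc ` S" "u' \<in> Suc ` S"
      then obtain t t' where tt: "t \<in> S" "t' \<in> S" "u = Suc t" "u' = Suc t'" by blast
      have r1: "rel J (cs ! t) (cs ! t')" using assms(1) tt(1,2) by (simp add: coh_def)
      have r2: "same_out T (cs ! t) (cs ! t')" using assms(2) tt(1,2) by simp
      have "rr (KK T J (cs ! t)) (step T w (cs ! t)) (step T w (cs ! t'))"
        by (rule step_rel[OF r1 r2])
      moreover have "KK T J (cs ! t) = KK T J (cs ! t0)"
      proof -
        have "rel J (cs ! t) (cs ! t0)" using assms(1) tt(1) t0 by (simp add: coh_def)
        then show ?thesis by (intro KK_st) (simp add: rel_def)
      qed
      ultimately show "rel (KK T J (cs ! t0)) (cs ! u) (cs ! u')"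
        using hstep all tt by simp
    qed
  qed
  ultimately show ?thesis by blast
qed

lemma coh_sub: "coh J S \<Longrightarrow> S' \<subseteq> S \<Longrightarrow> coh J S'"
  unfolding coh_def by blast

lemma coh_mono: "coh J S \<Longrightarrow> J \<subseteq> J' \<Longrightarrow> coh J' S"
  unfolding coh_def using rel_mono by blast

lemma part_bound:
  assumes "coh J S" "\<forall>t\<in>S. \<forall>t'\<in>S. same_out T (cs ! t) (cs ! t')"
    and IH: "\<And>S'. coh (KK T J (cs ! t0)) S' \<Longrightarrow> card S' \<le> 2 ^ card (KK T J (cs ! t0))"
    and t0: "t0 \<in> S"
  shows "card S \<le> 2 ^ card (KK T J (cs ! t0))"
proof (cases "card S \<le> 1")
  case True
  then show ?thesis by (rule le1_pow)
next
  case False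
  from shift[OF assms(1,2) False] t0 have "coh (KK T J (cs ! t0)) (Suc ` S)" by blast
  from IH[OF this] show ?thesis by (simp add: card_image)
qed

lemma main_count:
  "coh J S \<Longrightarrow> card S \<le> 2 ^ card J"
proof (induction "card J" arbitrary: J S rule: less_induct)
  case less
  note outer = less
  have "\<forall>S. coh J S \<longrightarrow> (\<forall>t\<in>S. length cs - t \<le> n) \<longrightarrow> card S \<le> 2 ^ card J" for n
  proof (induction n)
    case 0
    show ?case
    proof (intro allI impI)
      fix S assume a: "coh J S" "\<forall>t\<in>S. length cs - t \<le> 0"
      then have "S = {}" by (fastforce simp: coh_def)
      then show "card S \<le> 2 ^ card J" by simp
    qed
  next
    case (Suc n)
    show ?case
    proof (intro allI impI)
      fix S assume S: "coh J S" and bnd: "\<forall>t\<in>S. length cs - t \<le> Suc n"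
      show "card S \<le> 2 ^ card J"
      proof (cases "card S \<le> 1")
        case True
        then show ?thesis by (rule le1_pow)
      next
        case False
        then obtain t0 where t0: "t0 \<in> S" by fastforce
        have fin: "finite S" using S unfolding coh_def using finite_subset by blast
        show ?thesis
        proof (cases "\<exists>r1 r2. fst (delta T (st (cs ! t0))) = QEq r1 r2 \<and> (r1 \<in> J \<or> r2 \<in> J)")
          case True
          then obtain r1 r2 where q: "fst (delta T (st (cs ! t0))) = QEq r1 r2" and rj: "r1 \<in> J \<or> r2 \<in> J"
            by blast
          have stS: "\<forall>t\<in>S. st (cs ! t) = st (cs ! t0)"
          proof
            fix t assume "t \<in> S"
            then have "rel J (cs ! t) (cs ! t0)" using S t0 by (simp add: coh_def)
            then show "st (cs ! t) = st (cs ! t0)" by (simp add: rel_def)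
          qed
          have K: "\<And>t. t \<in> S \<Longrightarrow> KK T J (cs ! t) = J - {r1, r2}"
            using q stS by (simp add: KK_def)
          define J' where "J' = J - {r1, r2}"
          have cJ: "card J' < card J" unfolding J'_def using rj
          proof -
            have "J - {r1, r2} \<noteq> J" using rj by auto
            then have "J - {r1, r2} \<subset> J" by (intro psubsetI Diff_subset)
            moreover have "finite J" by simp
            ultimately show "card (J - {r1, r2}) < card J" by (simp add: psubset_card_mono)
          qed
          have cJ2: "Suc (card J') \<le> card J" using cJ by simp
          define ST where "ST = {t\<in>S. regs (cs ! t) r1 = regs (cs ! t) r2}"
          define SF where "SF = {t\<in>S. regs (cs ! t) r1 \<noteq> regs (cs ! t) r2}"
          have bound: "card P \<le> 2 ^ card J'" if P: "P \<subseteq> S"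
              "\<forall>t\<in>P. \<forall>t'\<in>P. (regs (cs ! t) r1 = regs (cs ! t) r2) = (regs (cs ! t') r1 = regs (cs ! t') r2)"
            for P
          proof (cases "P = {}")
            case True then show ?thesis by simp
          next
            case False
            then obtain p0 where p0: "p0 \<in> P" by blast
            have cP: "coh J P" using coh_sub[OF S P(1)] .
            have so: "\<forall>t\<in>P. \<forall>t'\<in>P. same_out T (cs ! t) (cs ! t')"
            proof (intro ballI)
              fix t t' assume a: "t \<in> P" "t' \<in> P"
              have "t \<in> S" using a(1) P(1) by (rule subsetD[rotated])
              then have "st (cs ! t) = st (cs ! t0)" using stS by simp
              then have "fst (delta T (st (cs ! t))) = QEq r1 r2" using q by (simp only:)
              moreover have "(regs (cs ! t) r1 = regs (cs ! t) r2) = (regs (cs ! t') r1 = regs (cs ! t') r2)"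
                by (rule P(2)[rule_format, OF a])
              ultimately show "same_out T (cs ! t) (cs ! t')" by (simp add: same_out_def)
            qed
            have "p0 \<in> S" using p0 P(1) by (rule subsetD[rotated])
            then have KP: "KK T J (cs ! p0) = J'" unfolding J'_def by (rule K)
            have IHJ: "card S' \<le> 2 ^ card J'" if "coh J' S'" for S'
              by (rule outer(1)[OF cJ that])
            have IHK: "\<And>S'. coh (KK T J (cs ! p0)) S' \<Longrightarrow> card S' \<le> 2 ^ card (KK T J (cs ! p0))"
              unfolding KP by (rule IHJ)
            show ?thesis using part_bound[OF cP so IHK p0] unfolding KP .
          qed
          have "card S = card ST + card SF"
          proof -
            have "S = ST \<union> SF" "ST \<inter> SF = {}" unfolding ST_def SF_def by auto
            moreover have "finite ST" "finite SF" using fin unfolding ST_def SF_def by auto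
            ultimately show ?thesis using card_Un_disjoint[of ST SF] by (simp only:)
          qed
          also have "\<dots> \<le> 2 ^ card J' + 2 ^ card J'"
          proof (rule add_mono)
            show "card ST \<le> 2 ^ card J'"
              by (rule bound) (auto simp: ST_def)
            show "card SF \<le> 2 ^ card J'"
              by (rule bound) (auto simp: SF_def)
          qed
          also have "\<dots> = 2 ^ Suc (card J')" by simp
          also have "\<dots> \<le> 2 ^ card J" using cJ2 by (intro power_increasing) auto
          finally show ?thesis .
        next
          case False2: False
          have so: "\<forall>t\<in>S. \<forall>t'\<in>S. same_out T (cs ! t) (cs ! t')"
          proof (intro ballI)
            fix t t' assume tt: "t \<in> S" "t' \<in> S"
            have r: "rel J (cs ! t) (cs ! t')" using S tt by (simp add: coh_def)
            have "rel J (cs ! t) (cs ! t0)" using S tt t0 by (simp add: coh_def)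
            then have st0: "st (cs ! t) = st (cs ! t0)" by (simp add: rel_def)
            show "same_out T (cs ! t) (cs ! t')"
            proof (cases "fst (delta T (st (cs ! t)))")
              case (QTest f) then show ?thesis by (simp add: same_out_def)
            next
              case (QEq r1 r2)
              then have "r1 \<notin> J" "r2 \<notin> J" using False2 st0 by auto
              then show ?thesis using QEq r by (simp add: same_out_def rel_def)
            qed
          qed
          from shift[OF S so False] t0 have all: "\<forall>t\<in>S. Suc t < length cs"
            and c2: "coh (KK T J (cs ! t0)) (Suc ` S)" by blast+
          have c3: "coh J (Suc ` S)" using coh_mono[OF c2 KK_sub] .
          have "\<forall>t\<in>Suc ` S. length cs - t \<le> n" using bnd all by auto
          then have "card (Suc ` S) \<le> 2 ^ card J" using Suc.IH c3 by blast
          then show ?thesis by (simp add: card_image)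
        qed
      qed
    qed
  qed
  note H = this
  have "\<forall>t\<in>S. length cs - t \<le> length cs" by simp
  then show ?case using H[of "length cs", rule_format, OF less.prems] by simp
qed

end

theorem mainTheorem18:
  fixes T :: "('q::finite, 'r::finite) sut"
  assumes "wf_sut T"
  shows "\<exists>k::nat. k \<ge> 1 \<and>
           (\<forall>w cs p. set w \<subseteq> {a. inP (sigma T) a} \<longrightarrow> accepting_run T w cs \<longrightarrow>
              length (filter (\<lambda>c. pos c = p) cs) \<le> k)"
proof (intro exI conjI allI impI)
  have "0 < card (UNIV::'q set)" by (simp add: card_gt_0_iff)
  then show "1 \<le> card (UNIV::'q set) * 2 ^ card (UNIV::'r set) * 2 ^ card (UNIV::'r set)" by simp
next
  fix w cs p
  assume acc: "accepting_run T w cs"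
  then have hs: "\<forall>i. Suc i < length cs \<longrightarrow> step T w (cs ! i) = Cont (cs ! Suc i)"
    and hne: "cs \<noteq> []" and hl: "\<exists>res. step T w (last cs) = Acc res"
    by (auto simp: accepting_run_def)
  obtain res where hl': "step T w (last cs) = Acc res" using hl by blast
  define S where "S = {i. i < length cs \<and> pos (cs ! i) = p}"
  define A where "A = (\<lambda>k::'q \<times> 'r set. {i\<in>S. st (cs ! i) = fst k \<and> {r. regs (cs ! i) r = None} = snd k})"
  have SU: "S = (\<Union>k\<in>UNIV. A k)" unfolding A_def by auto
  have cohA: "card (A k) \<le> 2 ^ card (UNIV::'r set)" for k
  proof -
    have "coh cs UNIV (A k)"
      unfolding coh_def[OF hs hne hl'] A_def S_def rel_def by auto
    from main_count[OF hs hne hl' this] show ?thesis by simp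
  qed
  have "length (filter (\<lambda>c. pos c = p) cs) = card S"
    unfolding S_def by (simp add: length_filter_conv_card)
  also have "\<dots> \<le> (\<Sum>k\<in>(UNIV :: ('q \<times> 'r set) set). card (A k))"
    unfolding SU by (rule card_UN_le) simp
  also have "\<dots> \<le> (\<Sum>k\<in>(UNIV :: ('q \<times> 'r set) set). 2 ^ card (UNIV::'r set))"
    by (rule sum_mono) (rule cohA)
  also have "\<dots> = card (UNIV::'q set) * 2 ^ card (UNIV::'r set) * 2 ^ card (UNIV::'r set)"
  proof -
    have u: "(UNIV :: ('q \<times> 'r set) set) = UNIV \<times> Pow UNIV" by auto
    have c: "card (UNIV :: ('q \<times> 'r set) set) = card (UNIV::'q set) * 2 ^ card (UNIV::'r set)"
      by (subst u, subst card_cartesian_product, subst card_Pow) simp_all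
    show ?thesis by (simp add: c)
  qed
  finally show "length (filter (\<lambda>c. pos c = p) cs) \<le> card (UNIV::'q set) * 2 ^ card (UNIV::'r set) * 2 ^ card (UNIV::'r set)" .
qed

end
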